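(* Let $0<\eta<1$, $0<\alpha<\frac1\eta$, $0<\beta<\frac{1-\alpha\eta}{1-\eta}$ and $\theta\in(0,\tfrac12)$. Set $$k_1=1+\frac{\max\{\alpha,\beta\}}{(1-\alpha\eta)-\beta(1-\eta)},\qquad k_2=\theta\left[1+\frac{\beta+\min\{(\alpha-\beta)\theta,(\alpha-\beta)(1-\theta)\}}{(1-\alpha\eta)-\beta(1-\eta)}\right],\qquad \gamma=\frac{k_2}{k_1}.$$ If $y\in C([0,1])$ and $y\ge 0$, then the unique solution $u$ of the boundary value problem $$u''(t)+y(t)=0,\quad t\in[0,1],\qquad u(0)=\beta u(\eta),\quad u(1)=\alpha u(\eta)$$ satisfies $$\min_{\theta\le t\le 1-\theta} u(t)\ge \gamma\,\|u\|_1,\qquad\text{where } \|u\|_1=\sup\{|u(t)|: 0\le t\le 1\}.$$ *)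

theory Defs
  imports "HOL-Analysis.Analysis"
begin

definition k1 :: "real \<Rightarrow> real \<Rightarrow> real \<Rightarrow> real" where
  "k1 \<eta> \<alpha> \<beta> = 1 + max \<alpha> \<beta> / ((1 - \<alpha> * \<eta>) - \<beta> * (1 - \<eta>))"

definition k2 :: "real \<Rightarrow> real \<Rightarrow> real \<Rightarrow> real \<Rightarrow> real" where
  "k2 \<eta> \<alpha> \<beta> \<theta> = \<theta> * (1 + (\<beta> + min ((\<alpha> - \<beta>) * \<theta>) ((\<alpha> - \<beta>) * (1 - \<theta>)))
      / ((1 - \<alpha> * \<eta>) - \<beta> * (1 - \<eta>)))"

definition gamma :: "real \<Rightarrow> real \<Rightarrow> real \<Rightarrow> real \<Rightarrow> real" where
  "gamma \<eta> \<alpha> \<beta> \<theta> = k2 \<eta> \<alpha> \<beta> \<theta> / k1 \<eta> \<alpha> \<beta>"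

definition norm1 :: "(real \<Rightarrow> real) \<Rightarrow> real" where
  "norm1 u = Sup ((\<lambda>t. \<bar>u t\<bar>) ` {0..1})"

end

theory Submission
  imports Defs
begin

lemma mvt_within01:
  fixes f f' :: "real \<Rightarrow> real"
  assumes d: "\<forall>t\<in>{0..1}. (f has_real_derivative f' t) (at t within {0..1})"
    and pq: "0 \<le> p" "p < q" "q \<le> 1"
  shows "\<exists>z. p < z \<and> z < q \<and> f q - f p = (q - p) * f' z"
proof -
  have c: "continuous_on {0..1} f"
    by (rule DERIV_continuous_on) (use d in auto)
  have c2: "continuous_on {p..q} f"
    using continuous_on_subset[OF c] pq by auto
  have dat: "(f has_real_derivative f' x) (at x)" if "0 < x" "x < 1" for x
  proof -
    have "(f has_real_derivative f' x) (at x within {0..1})" using d that by auto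
    then show ?thesis using at_within_Icc_at[of 0 x 1] that by simp
  qed
  have "\<exists>l z. p < z \<and> z < q \<and> DERIV f z :> l \<and> f q - f p = (q - p) * l"
  proof (rule MVT)
    fix x assume "p < x" "x < q"
    then have "(f has_real_derivative f' x) (at x)" using dat pq by auto
    then show "f differentiable (at x)" unfolding real_differentiable_def by blast
  qed (use pq c2 in auto)
  then obtain l z where z: "p < z" "z < q" "DERIV f z :> l" "f q - f p = (q - p) * l"
    by blast
  have "l = f' z" using DERIV_unique[OF z(3) dat[of z]] z pq by auto
  then show ?thesis using z by blast
qed

theorem lemma2p5:
  fixes \<eta> \<alpha> \<beta> \<theta> :: real and y u u' :: "real \<Rightarrow> real"
  assumes "0 < \<eta>" "\<eta> < 1"
    and "0 < \<alpha>" "\<alpha> < 1 / \<eta>"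
    and "0 < \<beta>" "\<beta> < (1 - \<alpha> * \<eta>) / (1 - \<eta>)"
    and "0 < \<theta>" "\<theta> < 1 / 2"
    and "continuous_on {0..1} y" "\<forall>t\<in>{0..1}. y t \<ge> 0"
    and "\<forall>t\<in>{0..1}. (u has_real_derivative u' t) (at t within {0..1})"
    and "\<forall>t\<in>{0..1}. (u' has_real_derivative (- y t)) (at t within {0..1})"
    and "u 0 = \<beta> * u \<eta>" "u 1 = \<alpha> * u \<eta>"
  shows "Inf (u ` {\<theta>..1 - \<theta>}) \<ge> gamma \<eta> \<alpha> \<beta> \<theta> * norm1 u"
proof -
  note A = assms
  have dec: "u' q \<le> u' p" if pq: "0 \<le> p" "p \<le> q" "q \<le> 1" for p q
  proof (cases "p = q")
    case False
    then obtain z where z: "p < z" "z < q" "u' q - u' p = (q - p) * (- y z)"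
      using mvt_within01[OF A(12), of p q] pq False by force
    have "y z \<ge> 0" using A(10) z pq by auto
    then have "(q - p) * (- y z) \<le> 0" using z by (simp add: mult_nonneg_nonneg)
    then show ?thesis using z by linarith
  qed simp
  have chord: "(b - a) * u x \<ge> (b - x) * u a + (x - a) * u b"
    if ab: "0 \<le> a" "a < x" "x < b" "b \<le> 1" for a x b
  proof -
    obtain c1 where c1: "a < c1" "c1 < x" "u x - u a = (x - a) * u' c1"
      using mvt_within01[OF A(11), of a x] ab by auto
    obtain c2 where c2: "x < c2" "c2 < b" "u b - u x = (b - x) * u' c2"
      using mvt_within01[OF A(11), of x b] ab by auto
    have "u' c2 \<le> u' c1" using dec[of c1 c2] c1 c2 ab by auto
    then have "(x - a) * (b - x) * u' c2 \<le> (x - a) * (b - x) * u' c1"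
      using ab by (intro mult_left_mono) auto
    moreover have "(b - a) * u x - (b - x) * u a - (x - a) * u b
        = (b - x) * (u x - u a) - (x - a) * (u b - u x)" by (simp add: algebra_simps)
    moreover have "(b - x) * (u x - u a) - (x - a) * (u b - u x)
        = (x - a) * (b - x) * u' c1 - (x - a) * (b - x) * u' c2"
      unfolding c1(3) c2(3) by (simp add: algebra_simps)
    ultimately show ?thesis by linarith
  qed
  define D where "D = (1 - \<alpha> * \<eta>) - \<beta> * (1 - \<eta>)"
  have Dpos: "D > 0"
    using A(6) A(1,2) by (simp add: D_def field_simps)
  have w: "u \<eta> \<ge> 0"
  proof -
    have "(1 - 0) * u \<eta> \<ge> (1 - \<eta>) * u 0 + (\<eta> - 0) * u 1"
      using chord[of 0 \<eta> 1] A(1,2) by auto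
    then have "u \<eta> * D \<ge> 0" using A(13,14) by (simp add: D_def algebra_simps)
    then show ?thesis using Dpos by (simp add: zero_le_mult_iff)
  qed
  have u0: "u 0 \<ge> 0" "u 1 \<ge> 0" using w A(3,5,13,14) by auto
  have nonneg: "u x \<ge> 0" if "0 \<le> x" "x \<le> 1" for x
  proof (cases "x = 0 \<or> x = 1")
    case True then show ?thesis using u0 by auto
  next
    case False
    then have "(1 - 0) * u x \<ge> (1 - x) * u 0 + (x - 0) * u 1"
      using chord[of 0 x 1] that by auto
    moreover have "(1 - x) * u 0 \<ge> 0" "x * u 1 \<ge> 0" using u0 that by auto
    ultimately show ?thesis by simp
  qed
  have key: "\<theta> * u s \<le> u t" if t: "\<theta> \<le> t" "t \<le> 1 - \<theta>" and s: "0 \<le> s" "s \<le> 1" for s t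
  proof -
    consider "s = t" | "t < s" | "s < t" by linarith
    then show ?thesis
    proof cases
      case 1
      have "\<theta> * u t \<le> 1 * u t" using nonneg[of t] A(7,8) t
        by (intro mult_right_mono) auto
      then show ?thesis using 1 by simp
    next
      case 2
      have "s * u t \<ge> (s - t) * u 0 + t * u s"
        using chord[of 0 t s] 2 t s A(7,8) by auto
      moreover have "(s - t) * u 0 \<ge> 0" using 2 u0 by auto
      ultimately have h: "s * u t \<ge> t * u s" by linarith
      have us: "u s \<ge> 0" using nonneg s by auto
      have "\<theta> * u s \<le> t * u s" using t us by (intro mult_right_mono) auto
      also have "t * u s \<le> s * u t" using h .
      also have "s * u t \<le> u t" using s nonneg[of t] t A(7,8)
        by (intro mult_left_le_one_le) auto
      finally show ?thesis .
    next
      case 3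
      have "(1 - s) * u t \<ge> (1 - t) * u s + (t - s) * u 1"
        using chord[of s t 1] 3 t s A(7,8) by auto
      moreover have "(t - s) * u 1 \<ge> 0" using 3 u0 by auto
      ultimately have h: "(1 - s) * u t \<ge> (1 - t) * u s" by linarith
      have us: "u s \<ge> 0" using nonneg s by auto
      have "\<theta> * u s \<le> (1 - t) * u s" using t us by (intro mult_right_mono) auto
      also have "(1 - t) * u s \<le> (1 - s) * u t" using h .
      also have "(1 - s) * u t \<le> u t" using s nonneg[of t] t A(7,8)
        by (intro mult_left_le_one_le) auto
      finally show ?thesis .
    qed
  qed
  have gle: "gamma \<eta> \<alpha> \<beta> \<theta> \<le> \<theta>"
  proof -
    have m: "\<beta> + min ((\<alpha> - \<beta>) * \<theta>) ((\<alpha> - \<beta>) * (1 - \<theta>)) \<le> max \<alpha> \<beta>"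
    proof (cases "\<alpha> \<le> \<beta>")
      case True
      have "(\<alpha> - \<beta>) * (1 - \<theta>) \<le> 0" using True A(8) by (simp add: mult_nonpos_nonneg)
      then show ?thesis using True by linarith
    next
      case False
      have "(\<alpha> - \<beta>) * \<theta> \<le> (\<alpha> - \<beta>)" using False A(8) by (simp add: mult_le_cancel_left1)
      then show ?thesis using False by linarith
    qed
    have k1pos: "k1 \<eta> \<alpha> \<beta> > 0"
    proof -
      have "max \<alpha> \<beta> / D > 0" using Dpos A(3,5) by (simp add: less_max_iff_disj)
      then show ?thesis by (simp add: k1_def D_def[symmetric])
    qed
    have "(\<beta> + min ((\<alpha> - \<beta>) * \<theta>) ((\<alpha> - \<beta>) * (1 - \<theta>))) / D \<le> max \<alpha> \<beta> / D"
      using m Dpos by (intro divide_right_mono) auto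
    then have "k2 \<eta> \<alpha> \<beta> \<theta> \<le> \<theta> * k1 \<eta> \<alpha> \<beta>"
      unfolding k2_def k1_def D_def[symmetric]
      using A(7) by (intro mult_left_mono) auto
    then show ?thesis using k1pos by (simp add: gamma_def divide_le_eq)
  qed
  have ne: "{\<theta>..1 - \<theta>} \<noteq> {}" using A(8) by auto
  show ?thesis
  proof (rule cInf_greatest)
    show "u ` {\<theta>..1 - \<theta>} \<noteq> {}" using ne by auto
  next
    fix v assume "v \<in> u ` {\<theta>..1 - \<theta>}"
    then obtain t where t: "\<theta> \<le> t" "t \<le> 1 - \<theta>" "v = u t" by auto
    have "norm1 u \<le> u t / \<theta>"
      unfolding norm1_def
    proof (rule cSup_least)
      show "(\<lambda>t. \<bar>u t\<bar>) ` {0..1} \<noteq> {}" by auto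
    next
      fix x assume "x \<in> (\<lambda>t. \<bar>u t\<bar>) ` {0..1}"
      then obtain s where s: "0 \<le> s" "s \<le> 1" "x = \<bar>u s\<bar>" by auto
      then have "x = u s" using nonneg by auto
      then show "x \<le> u t / \<theta>" using key[OF t(1,2) s(1,2)] A(7)
        by (simp add: le_divide_eq mult.commute)
    qed
    have bdd: "bdd_above ((\<lambda>t. \<bar>u t\<bar>) ` {0..1})"
    proof (rule bdd_aboveI2)
      fix s :: real assume "s \<in> {0..1}"
      then have "\<bar>u s\<bar> = u s" using nonneg by auto
      then show "\<bar>u s\<bar> \<le> u t / \<theta>" using key[OF t(1,2)] \<open>s \<in> {0..1}\<close> A(7)
        by (simp add: le_divide_eq mult.commute)
    qed
    have M0: "norm1 u \<ge> 0"
      unfolding norm1_def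
      by (rule cSup_upper2[OF _ _ bdd, of "\<bar>u 0\<bar>"]) auto
    have "gamma \<eta> \<alpha> \<beta> \<theta> * norm1 u \<le> \<theta> * norm1 u"
      using gle M0 by (intro mult_right_mono)
    also have "\<theta> * norm1 u \<le> u t"
      using \<open>norm1 u \<le> u t / \<theta>\<close> A(7) by (simp add: le_divide_eq mult.commute)
    finally show "gamma \<eta> \<alpha> \<beta> \<theta> * norm1 u \<le> v" using t by simp
  qed
qed

end
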